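(* For every integer $n\ge 0$, there is exactly one Dumont permutation of the first kind of length $2n$ avoiding the pattern $321$, i.e. $|\mathfrak D^1_{2n}(321)|=1$ (for $n=0$ the set consists of the empty permutation).
   Context: A Dumont permutation of the first kind of length $2n$ is a permutation $\pi\in\mathfrak S_{2n}$ such that for every $i=1,\dots,2n$: if $\pi(i)$ is even then $i<2n$ and $\pi(i)>\pi(i+1)$; if $\pi(i)$ is odd then $i=2n$ or $\pi(i)<\pi(i+1)$. $\mathfrak D^1_{2n}$ denotes the set of these. A permutation $\sigma$ contains a pattern $\tau\in\mathfrak S_k$ if some subsequence $(\sigma(i_1),\dots,\sigma(i_k))$, $i_1<\dots<i_k$, is order-isomorphic to $\tau$; otherwise $\sigma$ avoids $\tau$. $\mathfrak D^1_{2n}(T)$ denotes the set of permutations in $\mathfrak D^1_{2n}$ avoiding every pattern in $T$. *)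

theory Defs
  imports Main "HOL-Combinatorics.Permutations"
begin

definition dumont1 :: "nat \<Rightarrow> (nat \<Rightarrow> nat) \<Rightarrow> bool" where
  "dumont1 n p \<longleftrightarrow> p permutes {1..2*n} \<and>
     (\<forall>i\<in>{1..2*n}.
        (even (p i) \<longrightarrow> i < 2*n \<and> p i > p (i+1)) \<and>
        (odd (p i) \<longrightarrow> i = 2*n \<or> p i < p (i+1)))"

definition contains_pattern :: "nat \<Rightarrow> (nat \<Rightarrow> nat) \<Rightarrow> nat \<Rightarrow> (nat \<Rightarrow> nat) \<Rightarrow> bool" where
  "contains_pattern m sigma k tau \<longleftrightarrow>
     (\<exists>idx :: nat \<Rightarrow> nat. strict_mono_on {1..k} idx \<and> idx ` {1..k} \<subseteq> {1..m} \<and>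
        (\<forall>a\<in>{1..k}. \<forall>b\<in>{1..k}. sigma (idx a) < sigma (idx b) \<longleftrightarrow> tau a < tau b))"

definition avoids :: "nat \<Rightarrow> (nat \<Rightarrow> nat) \<Rightarrow> nat \<Rightarrow> (nat \<Rightarrow> nat) \<Rightarrow> bool" where
  "avoids m sigma k tau \<longleftrightarrow> \<not> contains_pattern m sigma k tau"

definition pat321 :: "nat \<Rightarrow> nat" where
  "pat321 i = (if i \<in> {1..3} then 4 - i else i)"

definition dumont1_avoiding :: "nat \<Rightarrow> nat \<Rightarrow> (nat \<Rightarrow> nat) \<Rightarrow> (nat \<Rightarrow> nat) set" where
  "dumont1_avoiding n k tau = {p. dumont1 n p \<and> avoids (2*n) p k tau}"

end

theory Submission
  imports Defs
begin

lemma odd_le: "odd (i::nat) \<Longrightarrow> i \<le> 2*n \<Longrightarrow> i+1 \<le> 2*n"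
  by (cases "i = 2*n") auto

lemma even_ge: "even (i::nat) \<Longrightarrow> 1 \<le> i \<Longrightarrow> 2 \<le> i"
  by (cases "i = 1") auto

lemma mk321:
  assumes "1 \<le> a" "a < b" "b < c" "c \<le> m" "p a > p b" "p b > p c"
  shows "contains_pattern m p 3 pat321"
proof -
  define idx where "idx = (\<lambda>x::nat. if x = 1 then a else if x = 2 then b else c)"
  have r: "x \<in> {1..3} \<longleftrightarrow> x = 1 \<or> x = 2 \<or> x = (3::nat)" for x by auto
  have "strict_mono_on {1..3} idx"
    unfolding strict_mono_on_def r idx_def using assms by auto
  moreover have "idx ` {1..3} \<subseteq> {1..m}" unfolding idx_def using assms by auto
  moreover have "\<forall>x\<in>{1..3}. \<forall>y\<in>{1..3}. p (idx x) < p (idx y) \<longleftrightarrow> pat321 x < pat321 y"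
    unfolding r idx_def pat321_def using assms by auto
  ultimately show ?thesis unfolding contains_pattern_def by blast
qed

lemma uniq:
  assumes d: "dumont1 n p" and av: "avoids (2*n) p 3 pat321"
  shows "k \<le> n \<Longrightarrow> \<forall>i\<in>{1..2*k}. p i = (if odd i then i+1 else i-1)"
proof (induction k)
  case 0
  then show ?case by simp
next
  case (Suc k)
  have D: "p permutes {1..2*n} \<and> (\<forall>i\<in>{1..2*n}.
        (even (p i) \<longrightarrow> i < 2*n \<and> p i > p (i+1)) \<and>
        (odd (p i) \<longrightarrow> i = 2*n \<or> p i < p (i+1)))" using d unfolding dumont1_def .
  have perm: "p permutes {1..2*n}" using D by (rule conjunct1)
  have ds: "even (p i) \<longrightarrow> i < 2*n \<and> p i > p (i+1)" if "i\<in>{1..2*n}" for i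
    using bspec[OF conjunct2[OF D] that] by (rule conjunct1)
  have inj: "inj p" by (rule permutes_inj[OF perm])
  have into: "p i \<in> {1..2*n}" if "i\<in>{1..2*n}" for i using permutes_in_image[OF perm, of i] that by simp
  have IH: "\<forall>i\<in>{1..2*k}. p i = (if odd i then i+1 else i-1)" using Suc by simp
  have small: "p i \<le> 2*k" if "i \<le> 2*k" "1 \<le> i" for i
  proof -
    have e: "p i = (if odd i then i+1 else i-1)" using IH that by simp
    show ?thesis
    proof (cases "odd i")
      case True then show ?thesis using e odd_le[of i k] that by simp
    next
      case False then show ?thesis using e that by simp
    qed
  qed
  have notsmall: "\<And>j. j > 2*k \<Longrightarrow> j \<in> {1..2*n} \<Longrightarrow> p j > 2*k"
  proof (rule ccontr)
    fix j assume j: "j > 2*k" "j \<in> {1..2*n}" "\<not> p j > 2*k"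
    define v where "v = p j"
    have v: "1 \<le> v" "v \<le> 2*k" using into[OF j(2)] j(3) v_def by auto
    define i where "i = (if odd v then v+1 else v-1)"
    have "i \<in> {1..2*k}" using v odd_le[of v k] even_ge[of v] unfolding i_def
      by auto
    then have "p i = (if odd i then i+1 else i-1)" using IH by blast
    also have "\<dots> = v" unfolding i_def using v by auto
    finally have "p i = p j" using v_def by simp
    then have "i = j" by (rule injD[OF inj])
    then show False using \<open>i \<in> {1..2*k}\<close> j by auto
  qed
  define m where "m = 2*k+2"
  have mS: "m \<in> {1..2*n}" using Suc.prems m_def by auto
  obtain j where pj: "p j = m"
    using permutes_surj[OF perm] by (metis surjD)
  have jS: "j \<in> {1..2*n}"
  proof (rule ccontr)
    assume "j \<notin> {1..2*n}"
    then have "p j = j" by (rule permutes_not_in[OF perm])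
    then show False using pj mS \<open>j \<notin> {1..2*n}\<close> by simp
  qed
  have "even (p j)" using pj m_def by simp
  hence jl: "j < 2*n" and desc: "p j > p (j+1)" using ds[OF jS] by auto
  have jk: "j > 2*k"
  proof (rule ccontr)
    assume "\<not> j > 2*k" then have "p j \<le> 2*k" using small jS by auto
    then show False using pj m_def by simp
  qed
  have j1S: "j+1 \<in> {1..2*n}" using jl by auto
  have "p (j+1) > 2*k" using notsmall[OF _ j1S] jk by simp
  then have pj1: "p (j+1) = 2*k+1" using desc pj m_def by simp
  have jeq: "j = 2*k+1"
  proof (rule ccontr)
    assume "j \<noteq> 2*k+1"
    hence jg: "j > 2*k+1" using jk by simp
    have sS: "2*k+1 \<in> {1..2*n}" using jl jg by auto
    have "p (2*k+1) > 2*k" using notsmall[OF _ sS] by simp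
    moreover have "p (2*k+1) \<noteq> 2*k+1"
    proof
      assume "p (2*k+1) = 2*k+1"
      hence "p (2*k+1) = p (j+1)" using pj1 by simp
      hence "2*k+1 = j+1" by (rule injD[OF inj])
      thus False using jg by simp
    qed
    moreover have "p (2*k+1) \<noteq> 2*k+2"
    proof
      assume "p (2*k+1) = 2*k+2"
      hence "p (2*k+1) = p j" using pj m_def by simp
      hence "2*k+1 = j" by (rule injD[OF inj])
      thus False using jg by simp
    qed
    ultimately have "p (2*k+1) > p j" using pj m_def by simp
    hence "contains_pattern (2*n) p 3 pat321"
      using mk321[of "2*k+1" j "j+1" "2*n" p] jg jl desc by simp
    thus False using av unfolding avoids_def by simp
  qed
  show ?case
  proof
    fix i assume "i \<in> {1..2*Suc k}"
    then consider "i \<in> {1..2*k}" | "i = 2*k+1" | "i = 2*k+2" by force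
    then show "p i = (if odd i then i+1 else i-1)"
    proof cases
      case 1 then show ?thesis using IH by blast
    next
      case 2 then show ?thesis using jeq pj m_def by simp
    next
      case 3 then show ?thesis using jeq pj1 by simp
    qed
  qed
qed

definition qq :: "nat \<Rightarrow> nat \<Rightarrow> nat" where
  "qq n i = (if i \<in> {1..2*n} then (if odd i then i+1 else i-1) else i)"

lemma qq_inv: "qq n (qq n i) = i"
  unfolding qq_def using odd_le[of i n] even_ge[of i] by auto

lemma qq_perm: "qq n permutes {1..2*n}"
  unfolding permutes_def
proof (intro conjI allI impI)
  fix x assume "x \<notin> {1..2*n}" then show "qq n x = x" unfolding qq_def by auto
next
  fix y show "\<exists>!x. qq n x = y"
    by (metis qq_inv)
qed

lemma qq_dumont: "dumont1 n (qq n)"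
  unfolding dumont1_def
proof (intro conjI qq_perm ballI)
  fix i assume i: "i \<in> {1..2*n}"
  show "even (qq n i) \<longrightarrow> i < 2 * n \<and> qq n (i + 1) < qq n i"
    using i odd_le[of i n] even_ge[of i] odd_le[of "i+1" n] unfolding qq_def by auto
  show "odd (qq n i) \<longrightarrow> i = 2 * n \<or> qq n i < qq n (i + 1)"
    using i odd_le[of i n] even_ge[of i] odd_le[of "i+1" n] unfolding qq_def by auto
qed

lemma qq_avoid: "avoids (2*n) (qq n) 3 pat321"
  unfolding avoids_def contains_pattern_def
proof
  assume "\<exists>idx. strict_mono_on {1..3} idx \<and> idx ` {1..3} \<subseteq> {1..2 * n} \<and>
     (\<forall>a\<in>{1..3}. \<forall>b\<in>{1..3}. (qq n (idx a) < qq n (idx b)) = (pat321 a < pat321 b))"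
  then obtain idx where sm: "strict_mono_on {1..3} idx" and im: "idx ` {1..3} \<subseteq> {1..2 * n}"
    and pp: "\<forall>a\<in>{1..3}. \<forall>b\<in>{1..3}. (qq n (idx a) < qq n (idx b)) = (pat321 a < pat321 b)"
    by blast
  have "idx 1 < idx 3" using sm unfolding strict_mono_on_def by auto
  moreover have "idx 2 < idx 3" "idx 1 < idx 2" using sm unfolding strict_mono_on_def by auto
  moreover have "qq n (idx 3) < qq n (idx 2)" "qq n (idx 2) < qq n (idx 1)"
    using pp unfolding pat321_def by auto
  moreover have "idx 1 \<in> {1..2*n}" "idx 3 \<in> {1..2*n}" using im by (auto simp: image_subset_iff)
  ultimately show False unfolding qq_def by (auto split: if_splits)
qed

theorem theorem2p3:
  fixes n :: nat
  shows "card (dumont1_avoiding n 3 pat321) = 1"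
proof -
  have "dumont1_avoiding n 3 pat321 = {qq n}"
  proof (intro equalityI subsetI)
    fix p assume "p \<in> dumont1_avoiding n 3 pat321"
    hence d: "dumont1 n p" and av: "avoids (2*n) p 3 pat321"
      unfolding dumont1_avoiding_def by auto
    have u: "\<forall>i\<in>{1..2*n}. p i = (if odd i then i+1 else i-1)" using uniq[OF d av, of n] by simp
    have perm: "p permutes {1..2*n}" using d unfolding dumont1_def by blast
    have "p = qq n"
    proof
      fix i show "p i = qq n i"
        using u permutes_not_in[OF perm, of i] unfolding qq_def by auto
    qed
    thus "p \<in> {qq n}" by simp
  next
    fix p assume "p \<in> {qq n}"
    thus "p \<in> dumont1_avoiding n 3 pat321"
      unfolding dumont1_avoiding_def using qq_dumont qq_avoid by simp
  qed
  thus ?thesis by simp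
qed

end
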